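(* Let $K,D,U$ be integers with $0\le U\le D$ and $U+D\le K-2$, and let $\mathbb{F}_q$ be any finite field. Consider the two-sided single unicast index coding problem with $K$ messages and $K$ receivers, where $R_k$ wants $x_k$ and has side-information $\{x_{k-U},\dots,x_{k-1}\}\cup\{x_{k+1},\dots,x_{k+D}\}$ (indices modulo $K$). Let $a=\gcd(K,D-U,U+1)$, $u_a=\frac{U+1}{a}$, $\Delta_a=\frac{D-U}{a}$, $K_a=\frac{K}{a}$, and let each message be $x_k=(x_{k,1},\dots,x_{k,u_a})\in\mathbb{F}_q^{u_a}$. Let $\mathbf{L}$ be the AIR matrix of size $K_a\times(K_a-\Delta_a)$ with rows $L_0,\dots,L_{K_a-1}$ (row indices taken modulo $K_a$). For $s\in[0:K_a-1]$ let $\mathbf{V}_s$ be the $u_a\times(K_a-\Delta_a)$ matrix with rows $L_s,L_{s+1},\dots,L_{s+u_a-1}$, let $\tilde{\mathbf{V}}_s$ be the $(au_a)\times(K_a-\Delta_a)$ matrix consisting of $a$ copies of $\mathbf{V}_s$ stacked vertically, and let $\mathbf{L}^{(2s)}$ be the $Ku_a\times(K_a-\Delta_a)$ matrix obtained by stacking $\tilde{\mathbf{V}}_0,\tilde{\mathbf{V}}_1,\dots,\tilde{\mathbf{V}}_{K_a-1}$ vertically. Then $\mathbf{L}^{(2s)}$ is an encoding matrix of an optimal length $u_a$-dimensional vector linear index code for this problem: with $\mathbf{x}=[x_{0,1}\,\cdots\,x_{0,u_a}\;x_{1,1}\,\cdots\,x_{1,u_a}\;\cdots\;x_{K-1,1}\,\cdots\,x_{K-1,u_a}]$,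 the broadcast symbols $[c_0\,\cdots\,c_{K_a-\Delta_a-1}]=\mathbf{x}\mathbf{L}^{(2s)}$ allow every receiver $R_k$ to decode $x_k$ from them and its side-information, and the code has rate $\frac{U+1}{K-D+U}$, equal to the symmetric capacity.
   Context: Index coding: a $p$-dimensional vector linear index code of length $N$ maps the messages $x_k\in\mathbb{F}_q^p$ linearly to $N$ broadcast symbols; receiver $R_k$ must recover $x_k$ from the broadcast symbols and its side-information; rate is $p/N$. For this problem (with $U+D\le K-2$) the symmetric capacity is $\frac{U+1}{K-D+U}$, and optimal length means rate equal to capacity. AIR matrix: for integers $m\ge n\ge1$, the binary $m\times n$ matrix built by: letting $\mathbf{I}_{c\times d}$ ($d\mid c$) be $c/d$ copies of $\mathbf{I}_d$ stacked vertically; starting with an empty $m\times n$ matrix whose unfilled part is everything; Step 1: $m=qn+r$, $0\le r<n$, fill the first $qn$ rows of the unfilled part with $\mathbf{I}_{qn\times n}$, unfilled part becomes the last $r$ rows, stop if $r=0$; Step 2: $n=q'r+r'$, $0\le r'<r$, fill the first $q'r$ columns of the unfilled part with $q'$ copies of $\mathbf{I}_r$ placed side by side, unfilled part becomes its last $r'$ columns, stop if $r'=0$, else set $m\leftarrow r$, $n\leftarrow r'$ and go to Step 1. *)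

theory Defs
  imports Complex_Main
begin

text \<open>AIR matrix of size m x n: air m n i j holds iff entry (i,j) (0-based) equals 1.
  Follows the recursive construction (Step 1 / Step 2) verbatim.\<close>
function air :: "nat \<Rightarrow> nat \<Rightarrow> nat \<Rightarrow> nat \<Rightarrow> bool" where
  "air m n i j =
     (if n = 0 \<or> m \<le> i \<or> n \<le> j then False
      else if i < (m div n) * n then i mod n = j
      else (let r = m mod n; i' = i - (m div n) * n in
            if r = 0 then False
            else if j < (n div r) * r then i' = j mod r
            else air r (n mod r) i' (j - (n div r) * r)))"
  by pat_completeness auto
termination
  by (relation "measure (\<lambda>(m, n, i, j). n)") (auto simp: Let_def intro: order.strict_trans[OF mod_less_divisor mod_less_divisor])

definition ic_a :: "nat \<Rightarrow> nat \<Rightarrow> nat \<Rightarrow> nat" where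
  "ic_a K D U = gcd K (gcd (D - U) (U + 1))"
definition ic_ua :: "nat \<Rightarrow> nat \<Rightarrow> nat \<Rightarrow> nat" where
  "ic_ua K D U = (U + 1) div ic_a K D U"
definition ic_Da :: "nat \<Rightarrow> nat \<Rightarrow> nat \<Rightarrow> nat" where
  "ic_Da K D U = (D - U) div ic_a K D U"
definition ic_Ka :: "nat \<Rightarrow> nat \<Rightarrow> nat \<Rightarrow> nat" where
  "ic_Ka K D U = K div ic_a K D U"
definition ic_N :: "nat \<Rightarrow> nat \<Rightarrow> nat \<Rightarrow> nat" where
  "ic_N K D U = ic_Ka K D U - ic_Da K D U"

text \<open>Entry (r,j) of L^(2s): block b = r div (a*ua) is tilde V_b; within it, row t = r mod (a*ua)
  is row (t mod ua) of V_b, i.e. row L_{(b + t mod ua) mod K_a} of the AIR matrix.\<close>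
definition L2s :: "nat \<Rightarrow> nat \<Rightarrow> nat \<Rightarrow> nat \<Rightarrow> nat \<Rightarrow> bool" where
  "L2s K D U r j =
     (let a = ic_a K D U; ua = ic_ua K D U; Ka = ic_Ka K D U in
      air Ka (ic_N K D U) ((r div (a * ua) + (r mod (a * ua)) mod ua) mod Ka) j)"

text \<open>Broadcast symbol c_j = x L^(2s) column j; message x k has components x k i, i < ua;
  position of x_{k,i+1} in the row vector is k*ua + i.\<close>
definition codeword :: "nat \<Rightarrow> nat \<Rightarrow> nat \<Rightarrow> (nat \<Rightarrow> nat \<Rightarrow> 'a::field) \<Rightarrow> nat \<Rightarrow> 'a" where
  "codeword K D U x j =
     (\<Sum>r<K * ic_ua K D U. x (r div ic_ua K D U) (r mod ic_ua K D U) * of_bool (L2s K D U r j))"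

definition side_info :: "nat \<Rightarrow> nat \<Rightarrow> nat \<Rightarrow> nat \<Rightarrow> nat set" where
  "side_info K D U k = {(k + K - t) mod K | t. 1 \<le> t \<and> t \<le> U} \<union> {(k + t) mod K | t. 1 \<le> t \<and> t \<le> D}"

end

theory Submission
  imports Defs
begin


declare air.simps[simp del]

definition solv :: "(nat \<Rightarrow> nat \<Rightarrow> bool) \<Rightarrow> nat set \<Rightarrow> nat set \<Rightarrow> (nat \<Rightarrow> 'a::field) \<Rightarrow> bool" where
  "solv M T C v \<longleftrightarrow> (\<exists>w. \<forall>t\<in>T. (\<Sum>c\<in>C. of_bool (M t c) * w c) = v t)"

lemma solv_empty: "solv M {} C v"
  by (simp add: solv_def)

lemma solv_rowunits:
  fixes M :: "nat \<Rightarrow> nat \<Rightarrow> bool"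
  assumes fin: "finite C" and inj: "inj_on \<phi> T1" and sub: "\<phi> ` T1 \<subseteq> C"
    and unit: "\<And>t c. t \<in> T1 \<Longrightarrow> c \<in> C \<Longrightarrow> M t c = (c = \<phi> t)"
    and rest: "\<And>v::nat\<Rightarrow>'a::field. solv M T2 (C - \<phi> ` T1) v"
  shows "solv M (T1 \<union> T2) C (v::nat\<Rightarrow>'a)"
proof -
  define F where "F = \<phi> ` T1"
  have finF: "finite F" using fin sub F_def finite_subset by blast
  define u where "u t = v t - (\<Sum>c\<in>F. of_bool (M t c) * v (inv_into T1 \<phi> c))" for t
  obtain w' where w': "\<And>t. t \<in> T2 \<Longrightarrow> (\<Sum>c\<in>C - F. of_bool (M t c) * w' c) = u t"
    using rest[of u] unfolding solv_def F_def by blast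
  define w where "w c = (if c \<in> F then v (inv_into T1 \<phi> c) else w' c)" for c
  have split: "(\<Sum>c\<in>C. of_bool (M t c) * w c) = (\<Sum>c\<in>F. of_bool (M t c) * w c) + (\<Sum>c\<in>C - F. of_bool (M t c) * w c)" for t
    using sum.subset_diff[OF _ fin, of F] sub F_def by (simp add: add.commute)
  show ?thesis unfolding solv_def
  proof (intro exI[of _ w] ballI)
    fix t assume t: "t \<in> T1 \<union> T2"
    show "(\<Sum>c\<in>C. of_bool (M t c) * w c) = v t"
    proof (cases "t \<in> T1")
      case True
      have "(\<Sum>c\<in>C. of_bool (M t c) * w c) = (\<Sum>c\<in>C. if c = \<phi> t then w c else 0)"
        by (rule sum.cong) (auto simp: unit True)
      also have "\<dots> = w (\<phi> t)" using sub True by (simp add: sum.delta' fin) blast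
      also have "\<dots> = v t" using True inj by (auto simp: w_def F_def)
      finally show ?thesis .
    next
      case False
      with t have t2: "t \<in> T2" by blast
      have "(\<Sum>c\<in>C - F. of_bool (M t c) * w c) = u t"
        using w'[OF t2] by (simp add: w_def)
      moreover have "(\<Sum>c\<in>F. of_bool (M t c) * w c) = (\<Sum>c\<in>F. of_bool (M t c) * v (inv_into T1 \<phi> c))"
        by (rule sum.cong) (auto simp: w_def)
      ultimately show ?thesis using split[of t] by (simp add: u_def)
    qed
  qed
qed

lemma solv_colunits:
  fixes M :: "nat \<Rightarrow> nat \<Rightarrow> bool"
  assumes fin: "finite C" and Cu: "Cu \<subseteq> C" and psi: "\<psi> ` Cu \<subseteq> T" and inj: "inj_on \<psi> Cu"
    and unit: "\<And>t c. t \<in> T \<Longrightarrow> c \<in> Cu \<Longrightarrow> M t c = (t = \<psi> c)"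
    and rest: "\<And>v::nat\<Rightarrow>'a::field. solv M (T - \<psi> ` Cu) (C - Cu) v"
  shows "solv M T C (v::nat\<Rightarrow>'a)"
proof -
  obtain w' where w': "\<And>t. t \<in> T - \<psi> ` Cu \<Longrightarrow> (\<Sum>c\<in>C - Cu. of_bool (M t c) * w' c) = v t"
    using rest[of v] unfolding solv_def by blast
  define w where "w c = (if c \<in> Cu then v (\<psi> c) - (\<Sum>c'\<in>C - Cu. of_bool (M (\<psi> c) c') * w' c') else w' c)" for c
  have finu: "finite Cu" using fin Cu finite_subset by blast
  show ?thesis unfolding solv_def
  proof (intro exI[of _ w] ballI)
    fix t assume t: "t \<in> T"
    have split: "(\<Sum>c\<in>C. of_bool (M t c) * w c) = (\<Sum>c\<in>Cu. of_bool (M t c) * w c) + (\<Sum>c\<in>C - Cu. of_bool (M t c) * w' c)"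
    proof -
      have "(\<Sum>c\<in>C - Cu. of_bool (M t c) * w c) = (\<Sum>c\<in>C - Cu. of_bool (M t c) * w' c)"
        by (rule sum.cong) (auto simp: w_def)
      then show ?thesis using sum.subset_diff[OF Cu fin, of "\<lambda>c. of_bool (M t c) * w c"] by (simp add: add.commute)
    qed
    show "(\<Sum>c\<in>C. of_bool (M t c) * w c) = v t"
    proof (cases "t \<in> \<psi> ` Cu")
      case True
      then obtain c0 where c0: "c0 \<in> Cu" "t = \<psi> c0" by blast
      have "(\<Sum>c\<in>Cu. of_bool (M t c) * w c) = (\<Sum>c\<in>Cu. if c = c0 then w c else 0)"
        by (rule sum.cong) (use c0 inj t unit in \<open>auto simp: inj_on_def\<close>)
      also have "\<dots> = w c0" using c0 finu by simp
      finally show ?thesis using split c0 by (simp add: w_def)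
    next
      case False
      have "(\<Sum>c\<in>Cu. of_bool (M t c) * w c) = 0"
        by (rule sum.neutral) (use False t unit in auto)
      then show ?thesis using split w'[of t] t False by simp
    qed
  qed
qed

lemma solv_reindex:
  fixes M :: "nat \<Rightarrow> nat \<Rightarrow> bool"
  assumes S: "\<And>v::nat\<Rightarrow>'a::field. solv M T C v"
    and inj: "inj_on f T'" and fT: "f ` T' \<subseteq> T" and g: "bij_betw g C' C"
    and eq: "\<And>i j. i \<in> T' \<Longrightarrow> j \<in> C' \<Longrightarrow> M' i j = M (f i) (g j)"
  shows "solv M' T' C' (v::nat\<Rightarrow>'a)"
proof -
  obtain w where w: "\<And>t. t \<in> T \<Longrightarrow> (\<Sum>c\<in>C. of_bool (M t c) * w c) = v (inv_into T' f t)"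
    using S[of "\<lambda>t. v (inv_into T' f t)"] unfolding solv_def by blast
  show ?thesis unfolding solv_def
  proof (intro exI[of _ "w \<circ> g"] ballI)
    fix i assume i: "i \<in> T'"
    have "(\<Sum>j\<in>C'. of_bool (M' i j) * (w \<circ> g) j) = (\<Sum>j\<in>C'. of_bool (M (f i) (g j)) * w (g j))"
      by (rule sum.cong) (auto simp: eq i)
    also have "\<dots> = (\<Sum>c\<in>C. of_bool (M (f i) c) * w c)"
      using sum.reindex_bij_betw[OF g, of "\<lambda>c. of_bool (M (f i) c) * w c"] by simp
    also have "\<dots> = v i" using w[of "f i"] i fT inj by auto
    finally show "(\<Sum>j\<in>C'. of_bool (M' i j) * (w \<circ> g) j) = v i" .
  qed
qed

lemma air_top:
  assumes "0 < n" "i < (m div n) * n" "j < n"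
  shows "air m n i j = (i mod n = j)"
proof -
  have "i < m" using assms(2) div_mult_mod_eq[of m n] by linarith
  then show ?thesis using assms by (subst air.simps) auto
qed

lemma air_bot:
  assumes "0 < n" "(m div n) * n \<le> i" "i < m" "j < n"
  shows "air m n i j = (if j < (n div (m mod n)) * (m mod n) then i - (m div n) * n = j mod (m mod n)
           else air (m mod n) (n mod (m mod n)) (i - (m div n) * n) (j - (n div (m mod n)) * (m mod n)))"
proof -
  have "m mod n \<noteq> 0" using assms(2,3) by (metis div_mult_mod_eq add.right_neutral not_le)
  then show ?thesis using assms by (subst air.simps) (auto simp: Let_def)
qed

lemma bij_shift: "bij_betw (\<lambda>t::nat. t + k) {a..<b} {a+k..<b+k}"
  by (simp add: bij_betw_def inj_on_def)

lemma bij_unshift: "(k::nat) \<le> a \<Longrightarrow> bij_betw (\<lambda>t. t - k) {a..<b} {a-k..<b-k}"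
  unfolding bij_betw_def inj_on_def by (auto simp: image_minus_const_atLeastLessThan_nat)

lemma bij_mod_window:
  assumes "0 < (r::nat)"
  shows "bij_betw (\<lambda>c. c mod r) {\<beta>..<\<beta>+r} {..<r}"
proof -
  have inj: "inj_on (\<lambda>c. c mod r) {\<beta>..<\<beta>+r}"
  proof (rule inj_onI)
    fix x y assume x: "x \<in> {\<beta>..<\<beta>+r}" and y: "y \<in> {\<beta>..<\<beta>+r}" and e: "x mod r = y mod r"
    show "x = y"
    proof (cases "x \<le> y")
      case True
      then have "r dvd y - x" using e mod_eq_dvd_iff_nat[of x y r] by simp
      moreover have "y - x < r" using x y by auto
      ultimately show ?thesis using True by (metis diff_is_0_eq dvd_imp_le le_antisym not_less zero_less_diff)
    next
      case False
      then have "r dvd x - y" using e mod_eq_dvd_iff_nat[of y x r] by simp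
      moreover have "x - y < r" using x y by auto
      ultimately show ?thesis using False by (metis diff_is_0_eq dvd_imp_le le_antisym not_less zero_less_diff)
    qed
  qed
  have sub: "(\<lambda>c. c mod r) ` {\<beta>..<\<beta>+r} \<subseteq> {..<r}" using assms by auto
  have "card ((\<lambda>c. c mod r) ` {\<beta>..<\<beta>+r}) = card {..<r}"
    using card_image[OF inj] by simp
  then have "(\<lambda>c. c mod r) ` {\<beta>..<\<beta>+r} = {..<r}"
    using card_subset_eq[OF _ sub] by simp
  then show ?thesis using inj by (simp add: bij_betw_def)
qed

lemma solv_perm:
  fixes M :: "nat \<Rightarrow> nat \<Rightarrow> bool"
  assumes fin: "finite C" and b: "bij_betw \<phi> T C"
    and unit: "\<And>t c. t \<in> T \<Longrightarrow> c \<in> C \<Longrightarrow> M t c = (c = \<phi> t)"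
  shows "solv M T C (v::nat\<Rightarrow>'a::field)"
proof -
  have "solv M (T \<union> {}) C v"
    by (rule solv_rowunits[OF fin]) (use b unit in \<open>auto simp: bij_betw_def solv_empty\<close>)
  then show ?thesis by simp
qed

lemma P_r0:
  assumes "0 < n" "n \<le> m" "m mod n = 0"
  shows "solv (\<lambda>t j. air m n ((p+t) mod m) j) {..<n} {..<n} (v::nat\<Rightarrow>'a::field)"
proof (rule solv_perm[where \<phi>="\<lambda>t. (p+t) mod n"])
  have "bij_betw (\<lambda>t. t + p) {0..<n} {p..<n+p}" using bij_shift[of p 0 n] by simp
  then have "bij_betw ((\<lambda>c. c mod n) \<circ> (\<lambda>t. t + p)) {0..<n} {..<n}"
    using bij_mod_window[OF assms(1), of p] by (auto intro: bij_betw_trans simp: add.commute)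
  then show "bij_betw (\<lambda>t. (p+t) mod n) {..<n} {..<n}" by (simp add: lessThan_atLeast0 o_def add.commute)
next
  fix t c assume "t \<in> {..<n}" "c \<in> {..<n}"
  moreover have "m div n * n = m" using assms(3) by (metis div_mult_mod_eq add.right_neutral)
  moreover have "(p + t) mod m < m" using assms by auto
  moreover have "(p+t) mod m mod n = (p+t) mod n" using assms(3) by (simp add: mod_mod_cancel mod_0_imp_dvd)
  ultimately show "air m n ((p+t) mod m) c = (c = (p+t) mod n)" using assms air_top[of n "(p+t) mod m" m c] by auto
qed simp

lemma Q_r0:
  assumes "0 < n" "n \<le> m" "m mod n = 0" "\<epsilon> \<le> n"
  shows "solv (\<lambda>t j. air m n (m-\<epsilon>+t) (n-\<epsilon>+j)) {..<\<epsilon>} {..<\<epsilon>} (v::nat\<Rightarrow>'a::field)"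
proof (rule solv_perm[where \<phi>="\<lambda>t. t"])
  fix t c assume t: "t \<in> {..<\<epsilon>}" and c: "c \<in> {..<\<epsilon>}"
  have mq: "m div n * n = m" using assms(3) by (metis div_mult_mod_eq add.right_neutral)
  have "(m - \<epsilon> + t) mod n = n - \<epsilon> + t"
  proof -
    obtain q where q: "m = n * q" using assms(3) by blast
    then have "q \<ge> 1" using assms by (cases q) auto
    then have e: "m - \<epsilon> + t = (n - \<epsilon> + t) + n * (q - 1)" using q assms t
      by (cases q) (auto simp: algebra_simps)
    have "((n - \<epsilon> + t) + n * (q - 1)) mod n = (n - \<epsilon> + t) mod n" by (rule mod_mult_self2)
    then show ?thesis using t assms e by simp
  qed
  then show "air m n (m-\<epsilon>+t) (n-\<epsilon>+c) = (c = t)"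
    using air_top[of n "m-\<epsilon>+t" m "n-\<epsilon>+c"] assms t c mq by auto
qed (auto simp: bij_betw_def)

lemma solv_perm_col:
  fixes M :: "nat \<Rightarrow> nat \<Rightarrow> bool"
  assumes fin: "finite C" and b: "bij_betw \<psi> C T"
    and unit: "\<And>t c. t \<in> T \<Longrightarrow> c \<in> C \<Longrightarrow> M t c = (t = \<psi> c)"
  shows "solv M T C (v::nat\<Rightarrow>'a::field)"
  by (rule solv_colunits[OF fin order.refl]) (use b unit in \<open>auto simp: bij_betw_def solv_empty\<close>)

lemma mod_in_block: "(Q::nat)*r \<le> c \<Longrightarrow> c < Q*r + r \<Longrightarrow> c mod r = c - Q*r"
proof -
  assume a: "Q*r \<le> c" "c < Q*r + r"
  then have "c = (c - Q*r) + r*Q" by (simp add: mult.commute)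
  then have "c mod r = (c - Q*r) mod r" by (metis mod_mult_self2)
  then show ?thesis using a by simp
qed

lemma B_eq:
  assumes "0 < n" "0 < m mod n" "i < m mod n" "j < n"
  shows "air m n (m div n * n + i) j = (if j < n div (m mod n) * (m mod n) then i = j mod (m mod n)
     else air (m mod n) (n mod (m mod n)) i (j - n div (m mod n) * (m mod n)))"
proof -
  have "m div n * n + i < m" using assms(3) div_mult_mod_eq[of m n] by linarith
  then show ?thesis using air_bot[of n m "m div n * n + i" j] assms by simp
qed

lemma CW:
  assumes n: "0 < n" and r: "r = m mod n" "0 < r" and beta: "\<beta> + r \<le> n"
  shows "solv (\<lambda>i j. air m n (m div n * n + i) j) {..<r} {\<beta>..<\<beta>+r} (v::nat\<Rightarrow>'a::field)"
proof -
  define q' where "q' = n div r"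
  define r' where "r' = n mod r"
  have nr: "n = q'*r + r'" by (simp add: q'_def r'_def)
  have rn: "r < n" using r n by simp
  have r'r: "r' < r" using r by (simp add: r'_def)
  have Beq: "air m n (m div n * n + i) j = (if j < q'*r then i = j mod r else air r r' i (j - q'*r))"
    if "i < r" "j < n" for i j using B_eq[of n m i j] that r n by (simp add: q'_def r'_def)
  show ?thesis
  proof (cases "\<beta> + r \<le> q'*r")
    case True
    show ?thesis
    proof (rule solv_perm_col[where \<psi>="\<lambda>c. c mod r"])
      show "bij_betw (\<lambda>c. c mod r) {\<beta>..<\<beta>+r} {..<r}" using bij_mod_window r by simp
    next
      fix t c assume "t \<in> {..<r}" "c \<in> {\<beta>..<\<beta>+r}"
      then show "air m n (m div n * n + t) c = (t = c mod r)" using Beq[of t c] True beta by auto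
    qed simp
  next
    case False
    have "q' \<ge> 1" using rn nr r'r by (cases q') auto
    then obtain Q where Q: "q' = Q + 1" by (metis add.commute le_Suc_ex plus_1_eq_Suc)
    define \<gamma> where "\<gamma> = q'*r - \<beta>"
    have b1: "\<beta> < q'*r" using beta nr r'r by linarith
    have b2: "Q*r < \<beta>" using False Q by (simp add: algebra_simps)
    have g1: "r - \<gamma> \<le> r'" using beta nr b1 by (simp add: \<gamma>_def)
    have T: "{..<r} = {..<r-\<gamma>} \<union> {r-\<gamma>..<r}" by auto
    have img: "(\<lambda>i. i + q'*r) ` {..<r-\<gamma>} = {q'*r..<\<beta>+r}"
    proof -
      have "(\<lambda>i. i + q'*r) ` {0..<r-\<gamma>} = {q'*r..<\<beta>+r}"
        using b1 False by (simp add: \<gamma>_def add.commute)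
      then show ?thesis by (simp add: lessThan_atLeast0)
    qed
    have C2: "{\<beta>..<\<beta>+r} - {q'*r..<\<beta>+r} = {\<beta>..<q'*r}" using b1 False by auto
    have "solv (\<lambda>i j. air m n (m div n * n + i) j) ({..<r-\<gamma>} \<union> {r-\<gamma>..<r}) {\<beta>..<\<beta>+r} v"
    proof (rule solv_rowunits[where \<phi>="\<lambda>i. i + q'*r"])
      show "inj_on (\<lambda>i. i + q'*r) {..<r-\<gamma>}" by (simp add: inj_on_def)
      show "(\<lambda>i. i + q'*r) ` {..<r-\<gamma>} \<subseteq> {\<beta>..<\<beta>+r}" using img b1 by auto
    next
      fix t c assume t: "t \<in> {..<r-\<gamma>}" and c: "c \<in> {\<beta>..<\<beta>+r}"
      show "air m n (m div n * n + t) c = (c = t + q'*r)"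
      proof (cases "c < q'*r")
        case True
        have "c mod r = c - Q*r" using mod_in_block[of Q r c] True b2 c Q by (simp add: algebra_simps)
        then have "c mod r \<ge> r - \<gamma>" using c Q b1 b2 by (simp add: \<gamma>_def algebra_simps, linarith)
        then show ?thesis using Beq[of t c] True t c beta by auto
      next
        case False
        have tr': "t < r'" using t g1 by auto
        have "1 \<le> r div r'" using tr' r'r by (simp add: div_greater_zero_iff Suc_le_eq)
        then have "1 * r' \<le> r div r' * r'" by (rule mult_le_mono1)
        then have "r' \<le> r div r' * r'" by simp
        then have tt: "t < r div r' * r'" using tr' by linarith
        have cq: "c - q'*r < r'" using c beta nr False tr' by auto
        have "air r r' t (c - q'*r) = (t mod r' = c - q'*r)"
          by (rule air_top) (use tt cq tr' in auto)
        then have "air r r' t (c - q'*r) = (t = c - q'*r)" using tr' by simp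
        moreover have "(c = t + q'*r) = (t = c - q'*r)" using False by auto
        moreover have "air m n (m div n * n + t) c = air r r' t (c - q'*r)"
          using Beq[of t c] False t c beta by auto
        ultimately show ?thesis by simp
      qed
    next
      show "solv (\<lambda>i j. air m n (m div n * n + i) j) {r-\<gamma>..<r} ({\<beta>..<\<beta>+r} - (\<lambda>i. i + q'*r) ` {..<r-\<gamma>}) v'" for v' :: "nat \<Rightarrow> 'a"
        unfolding img C2
      proof (rule solv_perm_col[where \<psi>="\<lambda>c. c - Q*r"])
        have "bij_betw (\<lambda>c. c - Q*r) {\<beta>..<q'*r} {\<beta> - Q*r..<q'*r - Q*r}" using bij_unshift b2 by simp
        moreover have "\<beta> - Q*r = r - \<gamma>" "q'*r - Q*r = r" using Q b1 b2 by (auto simp: \<gamma>_def algebra_simps)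
        ultimately show "bij_betw (\<lambda>c. c - Q*r) {\<beta>..<q'*r} {r-\<gamma>..<r}" by simp
      next
        fix t c assume t: "t \<in> {r-\<gamma>..<r}" and c: "c \<in> {\<beta>..<q'*r}"
        have "c mod r = c - Q*r" using mod_in_block[of Q r c] c b2 Q by (simp add: algebra_simps)
        then show "air m n (m div n * n + t) c = (t = c - Q*r)" using Beq[of t c] t c b1 nr by auto
      qed simp
    qed simp
    then show ?thesis using T by simp
  qed
qed

lemma Bcorner:
  assumes n: "0 < n" and r: "r = m mod n" "0 < r" and eps: "\<epsilon> \<le> r"
    and IHP: "\<And>p (v::nat\<Rightarrow>'a::field). solv (\<lambda>t j. air r (n mod r) ((p+t) mod r) j) {..<n mod r} {..<n mod r} v"
    and IHQ: "\<And>\<epsilon>' (v::nat\<Rightarrow>'a). \<epsilon>' \<le> n mod r \<Longrightarrow> solv (\<lambda>t j. air r (n mod r) (r-\<epsilon>'+t) (n mod r-\<epsilon>'+j)) {..<\<epsilon>'} {..<\<epsilon>'} v"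
  shows "solv (\<lambda>t j. air m n (m div n * n + (r-\<epsilon>+t)) (n-\<epsilon>+j)) {..<\<epsilon>} {..<\<epsilon>} (v::nat\<Rightarrow>'a)"
proof -
  define q' where "q' = n div r"
  define r' where "r' = n mod r"
  have nr: "n = q'*r + r'" by (simp add: q'_def r'_def)
  have rn: "r < n" using r n by simp
  have r'r: "r' < r" using r by (simp add: r'_def)
  have Beq: "air m n (m div n * n + i) j = (if j < q'*r then i = j mod r else air r r' i (j - q'*r))"
    if "i < r" "j < n" for i j using B_eq[of n m i j] that r n by (simp add: q'_def r'_def)
  show ?thesis
  proof (cases "\<epsilon> \<le> r'")
    case True
    have Q1: "\<And>v::nat\<Rightarrow>'a. solv (\<lambda>t j. air r r' (r-\<epsilon>+t) (r'-\<epsilon>+j)) {..<\<epsilon>} {..<\<epsilon>} v"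
      using IHQ True by (simp add: r'_def)
    have E: "air m n (m div n * n + (r-\<epsilon>+t)) (n-\<epsilon>+j) = air r r' (r-\<epsilon>+t) (r'-\<epsilon>+j)"
      if t: "t < \<epsilon>" and j: "j < \<epsilon>" for t j
    proof -
      have rr: "r-\<epsilon>+t < r" and jn: "n-\<epsilon>+j < n" using t j eps rn by auto
      have j1: "\<not> (n-\<epsilon>+j < q'*r)" using nr j True by auto
      have "air m n (m div n * n + (r-\<epsilon>+t)) (n-\<epsilon>+j) = air r r' (r-\<epsilon>+t) (n-\<epsilon>+j - q'*r)"
        using Beq[OF rr jn] j1 by simp
      moreover have "n-\<epsilon>+j - q'*r = r'-\<epsilon>+j" using nr True by auto
      ultimately show ?thesis by simp
    qed
    show ?thesis by (rule solv_reindex[OF Q1, where f=id and g=id]) (auto simp: E)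
  next
    case False
    have "q' \<ge> 1" using rn nr r'r by (cases q') auto
    then obtain Q where Q: "q' = Q + 1" by (metis add.commute le_Suc_ex plus_1_eq_Suc)
    have img: "(\<lambda>j. j + r') ` {..<\<epsilon>-r'} = {r'..<\<epsilon>}"
    proof -
      have "(\<lambda>j. j + r') ` {0..<\<epsilon>-r'} = {r'..<\<epsilon>}" using False by simp
      then show ?thesis by (simp add: lessThan_atLeast0)
    qed
    have T2: "{..<\<epsilon>} - {r'..<\<epsilon>} = {..<r'}" using False by auto
    have C2: "{..<\<epsilon>} - {..<\<epsilon>-r'} = {\<epsilon>-r'..<\<epsilon>}" by auto
    show ?thesis
    proof (rule solv_colunits[where Cu="{..<\<epsilon>-r'}" and \<psi>="\<lambda>j. j + r'"])
      show "(\<lambda>j. j + r') ` {..<\<epsilon>-r'} \<subseteq> {..<\<epsilon>}" using img by auto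
      show "inj_on (\<lambda>j. j + r') {..<\<epsilon>-r'}" by (simp add: inj_on_def)
    next
      fix t c assume t: "t \<in> {..<\<epsilon>}" and c: "c \<in> {..<\<epsilon>-r'}"
      have c1: "n-\<epsilon>+c < q'*r" using c nr False eps Q by (auto simp: algebra_simps)
      have "(n-\<epsilon>+c) mod r = n-\<epsilon>+c - Q*r"
        by (rule mod_in_block) (use c nr Q eps False in \<open>auto simp: algebra_simps\<close>)
      moreover have "air m n (m div n * n + (r-\<epsilon>+t)) (n-\<epsilon>+c) = (r-\<epsilon>+t = (n-\<epsilon>+c) mod r)"
        using Beq[of "r-\<epsilon>+t" "n-\<epsilon>+c"] t c c1 eps rn by auto
      moreover have "(r-\<epsilon>+t = n-\<epsilon>+c - Q*r) = (t = c + r')"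
        using nr Q eps t c False by (auto simp: algebra_simps)
      ultimately show "air m n (m div n * n + (r-\<epsilon>+t)) (n-\<epsilon>+c) = (t = c + r')" by simp
    next
      show "solv (\<lambda>t j. air m n (m div n * n + (r-\<epsilon>+t)) (n-\<epsilon>+j)) ({..<\<epsilon>} - (\<lambda>j. j + r') ` {..<\<epsilon>-r'}) ({..<\<epsilon>} - {..<\<epsilon>-r'}) v'" for v' :: "nat \<Rightarrow> 'a"
      proof -
        have P1: "\<And>v::nat\<Rightarrow>'a. solv (\<lambda>t j. air r r' ((r-\<epsilon>+t) mod r) j) {..<r'} {..<r'} v"
          using IHP by (simp add: r'_def)
        have bj0: "bij_betw (\<lambda>j. j - (\<epsilon>-r')) {\<epsilon>-r'..<\<epsilon>} {\<epsilon>-r'-(\<epsilon>-r')..<\<epsilon>-(\<epsilon>-r')}"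
          by (rule bij_unshift) simp
        then have bj: "bij_betw (\<lambda>j. j - (\<epsilon>-r')) {\<epsilon>-r'..<\<epsilon>} {..<r'}"
          using False by (simp add: lessThan_atLeast0)
        have E: "air m n (m div n * n + (r-\<epsilon>+t)) (n-\<epsilon>+j) = air r r' ((r-\<epsilon>+t) mod r) (j - (\<epsilon>-r'))"
          if t: "t \<in> {..<r'}" and j: "j \<in> {\<epsilon>-r'..<\<epsilon>}" for t j
        proof -
          have "(r - \<epsilon> + t) mod r = r-\<epsilon>+t" using t False eps by auto
          moreover have "air m n (m div n * n + (r-\<epsilon>+t)) (n-\<epsilon>+j) = air r r' (r-\<epsilon>+t) (n-\<epsilon>+j - q'*r)"
          proof -
            have rr: "r-\<epsilon>+t < r" and jn: "n-\<epsilon>+j < n" using t j eps rn False by auto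
            have j1: "\<not> (n-\<epsilon>+j < q'*r)" using nr j False by auto
            show ?thesis using Beq[OF rr jn] j1 by simp
          qed
          moreover have "n-\<epsilon>+j - q'*r = j - (\<epsilon>-r')" using nr False j eps Q by (auto simp: algebra_simps)
          ultimately show ?thesis by simp
        qed
        have "solv (\<lambda>t j. air m n (m div n * n + (r-\<epsilon>+t)) (n-\<epsilon>+j)) {..<r'} {\<epsilon>-r'..<\<epsilon>} v'"
          by (rule solv_reindex[OF P1, where f=id and g="\<lambda>j. j - (\<epsilon>-r')"]) (use bj E in auto)
        then show ?thesis unfolding img T2 C2 .
      qed
    qed auto
  qed
qed

lemma Q_step:
  assumes n: "0 < n" "n \<le> m" and r: "r = m mod n" "0 < r" and eps: "\<epsilon> \<le> n"
    and Bc: "\<And>\<epsilon>' (v::nat\<Rightarrow>'a::field). \<epsilon>' \<le> r \<Longrightarrow> solv (\<lambda>t j. air m n (m div n * n + (r-\<epsilon>'+t)) (n-\<epsilon>'+j)) {..<\<epsilon>'} {..<\<epsilon>'} v"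
  shows "solv (\<lambda>t j. air m n (m-\<epsilon>+t) (n-\<epsilon>+j)) {..<\<epsilon>} {..<\<epsilon>} (v::nat\<Rightarrow>'a)"
proof -
  define q where "q = m div n"
  have mq: "m = q*n + r" using r by (simp add: q_def)
  have rn: "r < n" using r n by simp
  have "q \<ge> 1" using n mq rn by (cases q) auto
  then obtain Q where Q: "q = Q + 1" by (metis add.commute le_Suc_ex plus_1_eq_Suc)
  show ?thesis
  proof (cases "\<epsilon> \<le> r")
    case True
    have E: "m-\<epsilon>+t = m div n * n + (r-\<epsilon>+t)" if "t < \<epsilon>" for t
      using mq True that by (simp add: q_def)
    show ?thesis by (rule solv_reindex[OF Bc[OF True], where f=id and g=id]) (auto simp: E)
  next
    case False
    have img: "(\<lambda>t. t + r) ` {..<\<epsilon>-r} = {r..<\<epsilon>}"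
    proof -
      have "(\<lambda>t. t + r) ` {0..<\<epsilon>-r} = {r..<\<epsilon>}" using False by simp
      then show ?thesis by (simp add: lessThan_atLeast0)
    qed
    have U: "{..<\<epsilon>-r} \<union> {\<epsilon>-r..<\<epsilon>} = {..<\<epsilon>}" by auto
    have C2: "{..<\<epsilon>} - {r..<\<epsilon>} = {..<r}" using False by auto
    have "solv (\<lambda>t j. air m n (m-\<epsilon>+t) (n-\<epsilon>+j)) ({..<\<epsilon>-r} \<union> {\<epsilon>-r..<\<epsilon>}) {..<\<epsilon>} v"
    proof (rule solv_rowunits[where \<phi>="\<lambda>t. t + r"])
      show "inj_on (\<lambda>t. t + r) {..<\<epsilon>-r}" by (simp add: inj_on_def)
      show "(\<lambda>t. t + r) ` {..<\<epsilon>-r} \<subseteq> {..<\<epsilon>}" using img by auto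
    next
      fix t c assume t: "t \<in> {..<\<epsilon>-r}" and c: "c \<in> {..<\<epsilon>}"
      have i1: "m-\<epsilon>+t < m div n * n" using t mq eps n False by (simp add: q_def)
      have "(m-\<epsilon>+t) mod n = m-\<epsilon>+t - Q*n"
        by (rule mod_in_block) (use t mq eps Q False in \<open>auto simp: algebra_simps\<close>)
      moreover have "air m n (m-\<epsilon>+t) (n-\<epsilon>+c) = ((m-\<epsilon>+t) mod n = n-\<epsilon>+c)"
        by (rule air_top) (use n i1 c eps in auto)
      moreover have "(m-\<epsilon>+t - Q*n = n-\<epsilon>+c) = (c = t + r)"
        using t c mq eps Q False by (auto simp: algebra_simps)
      ultimately show "air m n (m-\<epsilon>+t) (n-\<epsilon>+c) = (c = t + r)" by simp
    next
      fix v' :: "nat \<Rightarrow> 'a"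
      have CWi: "\<And>v::nat\<Rightarrow>'a. solv (\<lambda>i j. air m n (m div n * n + i) j) {..<r} {n-\<epsilon>..<n-\<epsilon>+r} v"
        by (rule CW) (use n r False eps in auto)
      have bj: "bij_betw (\<lambda>j. j + (n-\<epsilon>)) {..<r} {n-\<epsilon>..<n-\<epsilon>+r}"
        using bij_shift[of "n-\<epsilon>" 0 r] by (simp add: lessThan_atLeast0 add.commute)
      have E: "air m n (m-\<epsilon>+t) (n-\<epsilon>+j) = air m n (m div n * n + (t - (\<epsilon>-r))) (j + (n-\<epsilon>))"
        if "t \<in> {\<epsilon>-r..<\<epsilon>}" for t j
      proof -
        have t1: "\<epsilon> - r \<le> t" "t < \<epsilon>" using that by auto
        have "m-\<epsilon>+t = m div n * n + (t - (\<epsilon>-r))" using t1 mq False eps n unfolding q_def by arith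
        moreover have "n-\<epsilon>+j = j + (n-\<epsilon>)" by simp
        ultimately show ?thesis by (simp only:)
      qed
      have "solv (\<lambda>t j. air m n (m-\<epsilon>+t) (n-\<epsilon>+j)) {\<epsilon>-r..<\<epsilon>} {..<r} v'"
        by (rule solv_reindex[OF CWi, where f="\<lambda>t. t - (\<epsilon>-r)" and g="\<lambda>j. j + (n-\<epsilon>)"])
           (use bj E in \<open>auto simp: inj_on_def\<close>)
      then show "solv (\<lambda>t j. air m n (m-\<epsilon>+t) (n-\<epsilon>+j)) {\<epsilon>-r..<\<epsilon>} ({..<\<epsilon>} - (\<lambda>t. t + r) ` {..<\<epsilon>-r}) v'"
        unfolding img C2 .
    qed simp
    then show ?thesis using U by simp
  qed
qed

lemma bij_cyc: "0 < (n::nat) \<Longrightarrow> bij_betw (\<lambda>t. (p+t) mod n) {..<n} {..<n}"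
proof -
  assume n: "0 < n"
  have "bij_betw (\<lambda>t. t + p) {0..<n} {p..<n+p}" using bij_shift[of p 0 n] by simp
  then have "bij_betw ((\<lambda>c. c mod n) \<circ> (\<lambda>t. t + p)) {0..<n} {..<n}"
    using bij_mod_window[OF n, of p] by (auto intro: bij_betw_trans simp: add.commute)
  then show "bij_betw (\<lambda>t. (p+t) mod n) {..<n} {..<n}" by (simp add: lessThan_atLeast0 o_def add.commute)
qed

lemma mod_once: "(m::nat) \<le> x \<Longrightarrow> x < m + m \<Longrightarrow> x mod m = x - m"
  using mod_in_block[of 1 m x] by simp

lemma P_step:
  assumes n: "0 < n" "n \<le> m" and r: "r = m mod n" "0 < r"
    and Bc: "\<And>\<epsilon>' (v::nat\<Rightarrow>'a::field). \<epsilon>' \<le> r \<Longrightarrow> solv (\<lambda>t j. air m n (m div n * n + (r-\<epsilon>'+t)) (n-\<epsilon>'+j)) {..<\<epsilon>'} {..<\<epsilon>'} v"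
  shows "solv (\<lambda>t j. air m n ((p+t) mod m) j) {..<n} {..<n} (v::nat\<Rightarrow>'a)"
proof -
  define q where "q = m div n"
  have mq: "m = q*n + r" using r by (simp add: q_def)
  have rn: "r < n" using r n by simp
  have "q \<ge> 1" using n mq rn by (cases q) auto
  then obtain Q where Q: "q = Q + 1" by (metis add.commute le_Suc_ex plus_1_eq_Suc)
  have top: "air m n i j = (i mod n = j)" if "i < q*n" "j < n" for i j
    using air_top[of n i m j] that n by (simp add: q_def)
  have Beq: "air m n (q * n + i) j = (if j < (n div r)*r then i = j mod r else air r (n mod r) i (j - (n div r)*r))"
    if "i < r" "j < n" for i j using B_eq[of n m i j] that r n by (simp add: q_def)
  define p' where "p' = p mod m"
  have p'm: "p' < m" using n by (simp add: p'_def)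
  have rowp: "(\<lambda>t j. air m n ((p+t) mod m) j) = (\<lambda>t j. air m n ((p'+t) mod m) j)"
    by (simp add: p'_def mod_add_left_eq)
  have "solv (\<lambda>t j. air m n ((p'+t) mod m) j) {..<n} {..<n} v"
  proof (cases "p' + n \<le> q*n")
    case True
    show ?thesis
    proof (rule solv_perm[where \<phi>="\<lambda>t. (p'+t) mod n"])
      show "bij_betw (\<lambda>t. (p'+t) mod n) {..<n} {..<n}" using bij_cyc n by simp
    next
      fix t c assume t: "t \<in> {..<n}" and c: "c \<in> {..<n}"
      have "(p'+t) mod m = p'+t" using t True mq by simp
      then show "air m n ((p'+t) mod m) c = (c = (p'+t) mod n)" using top[of "p'+t" c] t c True by auto
    qed simp
  next
    case notA: False
    show ?thesis
    proof (cases "q*n < p'")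
      case True
      define \<epsilon> where "\<epsilon> = m - p'"
      have e1: "\<epsilon> < r" using True mq p'm by (simp add: \<epsilon>_def)
      have img: "(\<lambda>t. t - \<epsilon>) ` {\<epsilon>..<n} = {..<n-\<epsilon>}"
        by (simp add: image_minus_const_atLeastLessThan_nat lessThan_atLeast0)
      have U: "{\<epsilon>..<n} \<union> {..<\<epsilon>} = {..<n}" using e1 rn by auto
      have C2: "{..<n} - {..<n-\<epsilon>} = {n-\<epsilon>..<n}" by auto
      have "solv (\<lambda>t j. air m n ((p'+t) mod m) j) ({\<epsilon>..<n} \<union> {..<\<epsilon>}) {..<n} v"
      proof (rule solv_rowunits[where \<phi>="\<lambda>t. t - \<epsilon>"])
        show "inj_on (\<lambda>t. t - \<epsilon>) {\<epsilon>..<n}" by (auto simp: inj_on_def)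
        show "(\<lambda>t. t - \<epsilon>) ` {\<epsilon>..<n} \<subseteq> {..<n}" using img by auto
      next
        fix t c assume t: "t \<in> {\<epsilon>..<n}" and c: "c \<in> {..<n}"
        have "(p'+t) mod m = p'+t-m" by (rule mod_once) (use t p'm n in \<open>auto simp: \<epsilon>_def\<close>)
        also have "\<dots> = t - \<epsilon>" using t p'm by (auto simp: \<epsilon>_def)
        finally have e: "(p'+t) mod m = t - \<epsilon>" .
        have "t - \<epsilon> < q*n" using t Q by (auto simp: algebra_simps)
        then show "air m n ((p'+t) mod m) c = (c = t - \<epsilon>)" using top[of "t-\<epsilon>" c] e c t by auto
      next
        fix v' :: "nat \<Rightarrow> 'a"
        have bj0: "bij_betw (\<lambda>j. j - (n-\<epsilon>)) {n-\<epsilon>..<n} {n-\<epsilon>-(n-\<epsilon>)..<n-(n-\<epsilon>)}"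
          by (rule bij_unshift) simp
        then have bj: "bij_betw (\<lambda>j. j - (n-\<epsilon>)) {n-\<epsilon>..<n} {..<\<epsilon>}"
          using e1 rn by (simp add: lessThan_atLeast0)
        have E: "air m n ((p'+t) mod m) j = air m n (m div n * n + (r-\<epsilon>+id t)) (n-\<epsilon>+(j - (n-\<epsilon>)))"
          if "t \<in> {..<\<epsilon>}" "j \<in> {n-\<epsilon>..<n}" for t j
        proof -
          have "p'+t < m" using that p'm by (auto simp: \<epsilon>_def)
          then have "(p'+t) mod m = p'+t" by simp
          also have "\<dots> = q*n + (r-\<epsilon>+t)" using that mq p'm e1 by (auto simp: \<epsilon>_def)
          finally have "(p'+t) mod m = m div n * n + (r-\<epsilon>+id t)" by (simp add: q_def)
          moreover have "n-\<epsilon>+(j - (n-\<epsilon>)) = j" using that by auto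
          ultimately show ?thesis by (simp only:)
        qed
        have "solv (\<lambda>t j. air m n ((p'+t) mod m) j) {..<\<epsilon>} {n-\<epsilon>..<n} v'"
          by (rule solv_reindex[OF Bc[of \<epsilon>], where f=id and g="\<lambda>j. j - (n-\<epsilon>)"])
             (use e1 bj E in auto)
        then show "solv (\<lambda>t j. air m n ((p'+t) mod m) j) {..<\<epsilon>} ({..<n} - (\<lambda>t. t - \<epsilon>) ` {\<epsilon>..<n}) v'"
          unfolding img C2 .
      qed simp
      then show ?thesis using U by simp
    next
      case notD: False
      define \<alpha> where "\<alpha> = q*n - p'"
      have a1: "\<alpha> < n" using notA notD by (simp add: \<alpha>_def)
      have pQ: "Q*n \<le> p'" using notA Q by (simp add: algebra_simps)
      have img: "(\<lambda>t. t + (n-\<alpha>)) ` {..<\<alpha>} = {n-\<alpha>..<n}"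
      proof -
        have "(\<lambda>t. t + (n-\<alpha>)) ` {0..<\<alpha>} = {0 + (n-\<alpha>)..<\<alpha> + (n-\<alpha>)}" by (rule image_add_atLeastLessThan')
        then show ?thesis using a1 by (simp add: lessThan_atLeast0)
      qed
      have U: "{..<\<alpha>} \<union> {\<alpha>..<n} = {..<n}" using a1 by auto
      have C2: "{..<n} - {n-\<alpha>..<n} = {..<n-\<alpha>}" by auto
      have "solv (\<lambda>t j. air m n ((p'+t) mod m) j) ({..<\<alpha>} \<union> {\<alpha>..<n}) {..<n} v"
      proof (rule solv_rowunits[where \<phi>="\<lambda>t. t + (n-\<alpha>)"])
        show "inj_on (\<lambda>t. t + (n-\<alpha>)) {..<\<alpha>}" by (auto simp: inj_on_def)
        show "(\<lambda>t. t + (n-\<alpha>)) ` {..<\<alpha>} \<subseteq> {..<n}" using img by auto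
      next
        fix t c assume t: "t \<in> {..<\<alpha>}" and c: "c \<in> {..<n}"
        have pt: "p'+t < q*n" using t by (auto simp: \<alpha>_def)
        then have e: "(p'+t) mod m = p'+t" using mq by simp
        have "(p'+t) mod n = p'+t - Q*n" by (rule mod_in_block) (use pt pQ Q in \<open>auto simp: algebra_simps\<close>)
        also have "\<dots> = t + (n-\<alpha>)" using pQ Q a1 t notD by (auto simp: \<alpha>_def algebra_simps)
        finally show "air m n ((p'+t) mod m) c = (c = t + (n-\<alpha>))" using top[of "p'+t" c] e c pt by auto
      next
        fix v' :: "nat \<Rightarrow> 'a"
        have "solv (\<lambda>t j. air m n ((p'+t) mod m) j) {\<alpha>..<n} {..<n-\<alpha>} v'"
        proof (cases "m \<le> p' + n")
          case True
          have ar: "\<alpha> + r \<le> n" using True mq notD by (simp add: \<alpha>_def)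
          have img2: "(\<lambda>t. t - (\<alpha>+r)) ` {\<alpha>+r..<n} = {..<n-\<alpha>-r}"
            by (simp add: image_minus_const_atLeastLessThan_nat lessThan_atLeast0)
          have U2: "{\<alpha>+r..<n} \<union> {\<alpha>..<\<alpha>+r} = {\<alpha>..<n}" using ar by auto
          have C3: "{..<n-\<alpha>} - {..<n-\<alpha>-r} = {n-\<alpha>-r..<n-\<alpha>-r+r}" using ar by auto
          have "solv (\<lambda>t j. air m n ((p'+t) mod m) j) ({\<alpha>+r..<n} \<union> {\<alpha>..<\<alpha>+r}) {..<n-\<alpha>} v'"
          proof (rule solv_rowunits[where \<phi>="\<lambda>t. t - (\<alpha>+r)"])
            show "inj_on (\<lambda>t. t - (\<alpha>+r)) {\<alpha>+r..<n}" by (auto simp: inj_on_def)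
            show "(\<lambda>t. t - (\<alpha>+r)) ` {\<alpha>+r..<n} \<subseteq> {..<n-\<alpha>}" using img2 by auto
          next
            fix t c assume t: "t \<in> {\<alpha>+r..<n}" and c: "c \<in> {..<n-\<alpha>}"
            have "(p'+t) mod m = p'+t-m" by (rule mod_once) (use t p'm n mq notD in \<open>auto simp: \<alpha>_def\<close>)
            also have "\<dots> = t - (\<alpha>+r)" using t mq notD by (auto simp: \<alpha>_def)
            finally have e: "(p'+t) mod m = t - (\<alpha>+r)" .
            have "t - (\<alpha>+r) < q*n" using t Q by (auto simp: algebra_simps)
            then show "air m n ((p'+t) mod m) c = (c = t - (\<alpha>+r))" using top[of "t-(\<alpha>+r)" c] e c t by auto
          next
            fix v'' :: "nat \<Rightarrow> 'a"
            have CWi: "\<And>v::nat\<Rightarrow>'a. solv (\<lambda>i j. air m n (m div n * n + i) j) {..<r} {n-\<alpha>-r..<n-\<alpha>-r+r} v"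
              by (rule CW) (use n r ar in auto)
            have E: "air m n ((p'+t) mod m) j = air m n (m div n * n + (t - \<alpha>)) (id j)"
              if "t \<in> {\<alpha>..<\<alpha>+r}" for t j
            proof -
              have "p'+t < m" using that mq notD by (auto simp: \<alpha>_def)
              then have "(p'+t) mod m = p'+t" by simp
              also have "\<dots> = q*n + (t - \<alpha>)" using that mq notD by (auto simp: \<alpha>_def)
              finally have "(p'+t) mod m = m div n * n + (t - \<alpha>)" by (simp add: q_def)
              then show ?thesis by simp
            qed
            have "solv (\<lambda>t j. air m n ((p'+t) mod m) j) {\<alpha>..<\<alpha>+r} {n-\<alpha>-r..<n-\<alpha>-r+r} v''"
              by (rule solv_reindex[OF CWi, where f="\<lambda>t. t - \<alpha>" and g=id]) (use E in \<open>auto simp: inj_on_def\<close>)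
            then show "solv (\<lambda>t j. air m n ((p'+t) mod m) j) {\<alpha>..<\<alpha>+r} ({..<n-\<alpha>} - (\<lambda>t. t - (\<alpha>+r)) ` {\<alpha>+r..<n}) v''"
              unfolding img2 C3 .
          qed simp
          then show ?thesis using U2 by simp
        next
          case False
          show ?thesis
          proof (rule solv_perm[where \<phi>="\<lambda>t. t - \<alpha>"])
            have "bij_betw (\<lambda>t. t - \<alpha>) {\<alpha>..<n} {\<alpha>-\<alpha>..<n-\<alpha>}" by (rule bij_unshift) simp
            then show "bij_betw (\<lambda>t. t - \<alpha>) {\<alpha>..<n} {..<n-\<alpha>}" by (simp add: lessThan_atLeast0)
          next
            fix t c assume t: "t \<in> {\<alpha>..<n}" and c: "c \<in> {..<n-\<alpha>}"
            have e: "(p'+t) mod m = q*n + (t - \<alpha>)" using t False mq notD by (auto simp: \<alpha>_def)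
            have tr: "t - \<alpha> < r" using t False mq notD by (auto simp: \<alpha>_def)
            have cr: "c < r" using c False mq notD by (auto simp: \<alpha>_def)
            have "1 \<le> n div r" using rn r by (simp add: div_greater_zero_iff Suc_le_eq)
            then have "1 * r \<le> n div r * r" by (rule mult_le_mono1)
            then have "c < n div r * r" using cr by linarith
            then show "air m n ((p'+t) mod m) c = (c = t - \<alpha>)" using Beq[of "t-\<alpha>" c] e tr cr c a1 by auto
          qed simp
        qed
        then show "solv (\<lambda>t j. air m n ((p'+t) mod m) j) {\<alpha>..<n} ({..<n} - (\<lambda>t. t + (n-\<alpha>)) ` {..<\<alpha>}) v'"
          unfolding img C2 .
      qed simp
      then show ?thesis using U by simp
    qed
  qed
  then show ?thesis using rowp by simp
qed

lemma air_main:
  "n \<le> m \<Longrightarrow> (\<forall>p (v::nat\<Rightarrow>'a::field). solv (\<lambda>t j. air m n ((p+t) mod m) j) {..<n} {..<n} v)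
     \<and> (\<forall>\<epsilon>\<le>n. \<forall>v::nat\<Rightarrow>'a. solv (\<lambda>t j. air m n (m-\<epsilon>+t) (n-\<epsilon>+j)) {..<\<epsilon>} {..<\<epsilon>} v)"
proof (induction n arbitrary: m rule: less_induct)
  case (less n)
  show ?case
  proof (cases "n = 0")
    case True
    then show ?thesis by (simp add: solv_empty)
  next
    case False
    then have n: "0 < n" by simp
    show ?thesis
    proof (cases "m mod n = 0")
      case True
      then show ?thesis using P_r0[OF n less.prems True] Q_r0[OF n less.prems True] by blast
    next
      case False
      define r where "r = m mod n"
      have r0: "0 < r" using False by (simp add: r_def)
      have rn: "r < n" using n by (simp add: r_def)
      have r'n: "n mod r < n" using r0 rn by (meson mod_less_divisor order.strict_trans)
      have r'r: "n mod r \<le> r" using r0 by (simp add: less_imp_le)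
      have IH: "(\<forall>p (v::nat\<Rightarrow>'a). solv (\<lambda>t j. air r (n mod r) ((p+t) mod r) j) {..<n mod r} {..<n mod r} v)
     \<and> (\<forall>\<epsilon>\<le>n mod r. \<forall>v::nat\<Rightarrow>'a. solv (\<lambda>t j. air r (n mod r) (r-\<epsilon>+t) (n mod r-\<epsilon>+j)) {..<\<epsilon>} {..<\<epsilon>} v)"
        using less.IH[OF r'n r'r] .
      have Bc: "\<And>\<epsilon>' (v::nat\<Rightarrow>'a). \<epsilon>' \<le> r \<Longrightarrow> solv (\<lambda>t j. air m n (m div n * n + (r-\<epsilon>'+t)) (n-\<epsilon>'+j)) {..<\<epsilon>'} {..<\<epsilon>'} v"
        by (rule Bcorner[OF n r_def r0]) (use IH in auto)
      show ?thesis
        using P_step[OF n less.prems r_def r0 Bc] Q_step[OF n less.prems r_def r0 _ Bc] by blast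
    qed
  qed
qed

lemma mod_div_swap: "0 < (a::nat) \<Longrightarrow> (x mod (a*b)) div a = (x div a) mod b"
proof -
  assume a: "0 < a"
  have "x mod (a*b) = a * (x div a mod b) + x mod a" by (rule mod_mult2_eq)
  then show ?thesis using a by simp
qed

lemma idx:
  fixes K D U a Ka Da ua k k' i i' :: nat
  assumes a: "0 < a" and K: "K = a*Ka" and Da: "D - U = a*Da" and ua: "U + 1 = a*ua"
    and UD: "U \<le> D" and UDK: "U + D + 2 \<le> K" and k: "k < K" and k': "k' < K"
    and i': "i' < ua" and i: "i < ua" and ns: "k' \<notin> side_info K D U k"
  shows "\<exists>t < Ka - Da. (k div a + ua + Da + t) mod Ka = (k' div a + i') mod Ka
            \<and> (t = Ka - Da - ua + i \<longleftrightarrow> (k' = k \<and> i' = i))"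
proof -
  have D1: "D + 1 = a*(Da + ua)" using Da ua UD by (simp add: algebra_simps)
  have "a*(Da+ua) < a*Ka" using D1 K UDK by linarith
  then have lt: "Da + ua < Ka" by simp
  define d where "d = (k' + K - k) mod K"
  have dK: "d < K" using k by (simp add: d_def)
  have kd: "(k + d) mod K = k'"
  proof -
    have "(k + d) mod K = (k + (k' + K - k)) mod K" by (simp add: d_def mod_add_right_eq)
    also have "k + (k' + K - k) = k' + K" using k by simp
    finally show ?thesis using k' by simp
  qed
  have dcase: "d = 0 \<or> (D < d \<and> d < K - U)"
  proof (rule ccontr)
    assume "\<not> ?thesis"
    then have "(1 \<le> d \<and> d \<le> D) \<or> (K - U \<le> d)" by auto
    then show False
    proof
      assume "1 \<le> d \<and> d \<le> D"
      then have "k' \<in> side_info K D U k" using kd unfolding side_info_def by blast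
      then show False using ns by simp
    next
      assume h: "K - U \<le> d"
      define t where "t = K - d"
      have t1: "1 \<le> t" "t \<le> U" using h dK UDK by (auto simp: t_def)
      have "k + K - t = k + d" using dK by (simp add: t_def)
      then have "(k + K - t) mod K = k'" using kd by simp
      then have "k' \<in> side_info K D U k" using t1 unfolding side_info_def by blast
      then show False using ns by simp
    qed
  qed
  show ?thesis
  proof (cases "d = 0")
    case True
    then have kk: "k' = k" using kd k by simp
    have "(k div a + ua + Da + (Ka - Da - ua + i')) = (k div a + i') + Ka" using lt by simp
    then have "(k div a + ua + Da + (Ka - Da - ua + i')) mod Ka = ((k div a + i') + Ka) mod Ka" by (simp only:)
    also have "\<dots> = (k' div a + i') mod Ka" using kk by simp
    finally have "(k div a + ua + Da + (Ka - Da - ua + i')) mod Ka = (k' div a + i') mod Ka" .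
    then show ?thesis using i' lt kk by (intro exI[of _ "Ka - Da - ua + i'"]) auto
  next
    case False
    then have dd: "D < d" "d < K - U" using dcase by auto
    have kk: "k' \<noteq> k"
    proof
      assume "k' = k"
      then have "d = K mod K" using k by (simp add: d_def)
      then show False using False by simp
    qed
    define b where "b = k div a"
    define c where "c = k mod a"
    define e where "e = (c + d) div a"
    have ca: "c < a" using a by (simp add: c_def)
    have kbc: "k = b*a + c" by (simp add: b_def c_def)
    have kda: "(k + d) div a = b + e"
    proof -
      have "k + d = (c + d) + b*a" using kbc by simp
      then have "(k + d) div a = ((c + d) + b*a) div a" by (simp only:)
      also have "\<dots> = b + (c+d) div a" using a by (rule div_mult_self1[OF gr_implies_not0])
      finally show ?thesis by (simp add: e_def)
    qed
    have k'div: "k' div a = (b + e) mod Ka"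
    proof -
      have "k' div a = ((k+d) mod (a*Ka)) div a" using kd K by simp
      also have "\<dots> = ((k+d) div a) mod Ka" using mod_div_swap[OF a] by simp
      finally show ?thesis using kda by simp
    qed
    have e1: "Da + ua \<le> e"
    proof -
      have "(Da + ua) * a \<le> c + d" using D1 dd by (simp add: mult.commute)
      then show ?thesis using less_eq_div_iff_mult_less_eq[OF a] by (simp add: e_def)
    qed
    have e2: "e < Ka - ua + 1"
    proof -
      define s where "s = Ka - ua"
      have s: "Ka = ua + s" using lt by (simp add: s_def)
      have aK: "a*Ka = a*ua + a*s" using s by (simp add: algebra_simps)
      have "K - U = a*s + 1" using K ua UDK aK by linarith
      moreover have "d < K - U" by (rule dd(2))
      ultimately have "d \<le> a*s" by linarith
      then have "c + d < s*a + 1*a" using ca by (simp add: mult.commute)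
      then have "c + d < (s + 1) * a" by (simp only: add_mult_distrib)
      then have "e < s + 1" using div_less_iff_less_mult[OF a] by (simp add: e_def)
      then show ?thesis by (simp add: s_def)
    qed
    define t where "t = e - (Da + ua) + i'"
    have tlt: "t < Ka - Da - ua" using e1 e2 i' lt by (simp add: t_def)
    have "k div a + ua + Da + t = (b + e) + i'" using e1 by (simp add: t_def b_def)
    then have "(k div a + ua + Da + t) mod Ka = (k' div a + i') mod Ka"
      using k'div by (simp add: mod_add_left_eq)
    then show ?thesis using tlt kk by (intro exI[of _ t]) auto
  qed
qed


lemma self_not_side:
  assumes k: "k < K" and U: "U < K" and D: "D < K"
  shows "k \<notin> side_info K D U k"
proof
  assume "k \<in> side_info K D U k"
  then obtain t where t: "1 \<le> t" "t < K" "(k + K - t) mod K = k \<or> (k + t) mod K = k"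
    unfolding side_info_def using U D by auto
  have c1: "(k + (K - t)) mod K \<noteq> k"
  proof (cases "k + (K - t) < K")
    case True then show ?thesis using t by simp
  next
    case False
    then have "(k + (K - t)) mod K = k + (K - t) - K" using k t by (intro mod_once) auto
    then show ?thesis using t False by auto
  qed
  have c2: "(k + t) mod K \<noteq> k"
  proof (cases "k + t < K")
    case True then show ?thesis using t by simp
  next
    case False
    then have "(k + t) mod K = k + t - K" using k t by (intro mod_once) auto
    then show ?thesis using t False by auto
  qed
  have "k + K - t = k + (K - t)" using t by simp
  then show False using t c1 c2 by auto
qed

theorem lemma2:
  fixes K D U :: nat
  assumes "U \<le> D" and "U + D + 2 \<le> K"
  shows "(\<forall>k<K. \<forall>x y :: nat \<Rightarrow> nat \<Rightarrow> 'a::{finite,field}.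
            (\<forall>j<ic_N K D U. codeword K D U x j = codeword K D U y j) \<and>
            (\<forall>k'\<in>side_info K D U k. \<forall>i<ic_ua K D U. x k' i = y k' i)
            \<longrightarrow> (\<forall>i<ic_ua K D U. x k i = y k i))
         \<and> real (ic_ua K D U) / real (ic_N K D U) = real (U + 1) / real (K - D + U)"
proof -
  define a where "a = ic_a K D U"
  define ua where "ua = ic_ua K D U"
  define Da where "Da = ic_Da K D U"
  define Ka where "Ka = ic_Ka K D U"
  define N where "N = ic_N K D U"
  have a0: "0 < a" using assms by (simp add: a_def ic_a_def)
  have adK: "a dvd K" by (simp add: a_def ic_a_def)
  have adD: "a dvd (D - U)" unfolding a_def ic_a_def by (meson dvd_trans gcd_dvd1 gcd_dvd2)
  have adU: "a dvd (U + 1)" unfolding a_def ic_a_def by (meson dvd_trans gcd_dvd2)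
  have K: "K = a*Ka" using adK by (simp add: Ka_def ic_Ka_def a_def)
  have Da: "D - U = a*Da" using adD by (simp add: Da_def ic_Da_def a_def)
  have ua: "U + 1 = a*ua" using adU by (simp add: ua_def ic_ua_def a_def)
  have ua0: "0 < ua" using ua by (cases ua) auto
  have D1: "D + 1 = a*(Da + ua)" using Da ua assms(1) by (simp add: algebra_simps)
  have "a*(Da+ua) < a*Ka" using D1 K assms(2) by linarith
  then have lt: "Da + ua < Ka" by simp
  have Nd: "N = Ka - Da" by (simp add: N_def ic_N_def Ka_def Da_def)
  have NKa: "N \<le> Ka" using Nd by simp
  have aN: "a*N = K - D + U"
  proof -
    have "a*N = a*Ka - a*Da" using Nd by (simp add: diff_mult_distrib2)
    then show ?thesis using K Da assms by simp
  qed
  have rate: "real ua / real N = real (U + 1) / real (K - D + U)"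
  proof -
    have "real (U + 1) / real (K - D + U) = real (a*ua) / real (a*N)" using ua aN by simp
    also have "\<dots> = real ua / real N" using a0 by simp
    finally show ?thesis by simp
  qed
  have dec: "\<forall>i<ua. x k i = y k i"
    if k: "k < K" and H1: "\<forall>j<N. codeword K D U x j = codeword K D U y j"
      and H2: "\<forall>k'\<in>side_info K D U k. \<forall>i<ua. x k' i = y k' i"
    for k and x y :: "nat \<Rightarrow> nat \<Rightarrow> 'a::{finite,field}"
  proof (intro allI impI)
    fix i assume i: "i < ua"
    define z where "z k' i' = x k' i' - y k' i'" for k' i'
    have cz: "codeword K D U z j = 0" if "j < N" for j
    proof -
      have "codeword K D U z j = codeword K D U x j - codeword K D U y j"
        unfolding codeword_def z_def by (simp only: sum_subtractf[symmetric] left_diff_distrib)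
      then show ?thesis using H1 that by simp
    qed
    define p0 where "p0 = k div a + ua + Da"
    define ts where "ts = Ka - Da - ua + i"
    have "solv (\<lambda>t j. air Ka N ((p0+t) mod Ka) j) {..<N} {..<N} (\<lambda>t. if t = ts then 1 else (0::'a))"
      using air_main[OF NKa] by blast
    then obtain w :: "nat \<Rightarrow> 'a" where w: "\<And>t. t < N \<Longrightarrow> (\<Sum>c<N. of_bool (air Ka N ((p0+t) mod Ka) c) * w c) = (if t = ts then 1 else 0)"
      unfolding solv_def by blast
    define g where "g \<rho> = (\<Sum>c<N. of_bool (air Ka N \<rho> c) * w c)" for \<rho>
    define rw where "rw r = ((r div ua) div a + r mod ua) mod Ka" for r
    have L2: "L2s K D U r j = air Ka N (rw r) j" for r j
    proof -
      have "r div (a*ua) = r div (ua*a)" by (simp add: mult.commute)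
      also have "\<dots> = r div ua div a" by (rule div_mult2_eq)
      finally have "r div (a*ua) = r div ua div a" .
      moreover have "r mod (a*ua) mod ua = r mod ua" by (simp add: mod_mod_cancel)
      ultimately show ?thesis
        unfolding L2s_def Let_def rw_def
        by (simp add: a_def[symmetric] ua_def[symmetric] Ka_def[symmetric] N_def[symmetric])
    qed
    have claim: "z (r div ua) (r mod ua) * g (rw r) = (if r = k*ua + i then z k i else 0)"
      if r: "r < K*ua" for r
    proof -
      define k' where "k' = r div ua"
      define i' where "i' = r mod ua"
      have k': "k' < K" using r ua0 by (simp add: k'_def div_less_iff_less_mult)
      have i': "i' < ua" using ua0 by (simp add: i'_def)
      have req: "(r = k*ua + i) = (k' = k \<and> i' = i)"
      proof -
        have "r = k'*ua + i'" by (simp add: k'_def i'_def)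
        then show ?thesis using i i' by (metis div_mult_self3 mod_mult_self3 mod_less div_less add.commute gr_implies_not0 ua0 add.right_neutral)
      qed
      show ?thesis
      proof (cases "k' \<in> side_info K D U k")
        case True
        have "z k' i' = 0" using H2 True i' by (simp add: z_def)
        moreover have "k' \<noteq> k" using True self_not_side[OF k] assms by auto
        ultimately show ?thesis using req by (simp add: k'_def i'_def)
      next
        case False
        obtain t where t: "t < Ka - Da" "(k div a + ua + Da + t) mod Ka = (k' div a + i') mod Ka"
          "t = Ka - Da - ua + i \<longleftrightarrow> (k' = k \<and> i' = i)"
          using idx[OF a0 K Da ua assms(1,2) k k' i' i False] by blast
        have "g (rw r) = (if t = ts then 1 else 0)"
          using w[of t] t Nd by (simp add: g_def rw_def p0_def k'_def i'_def)
        then show ?thesis using t(3) req by (auto simp: ts_def k'_def i'_def)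
      qed
    qed
    have "0 = (\<Sum>j<N. w j * codeword K D U z j)" using cz by simp
    also have "\<dots> = (\<Sum>j<N. \<Sum>r<K*ua. w j * (z (r div ua) (r mod ua) * of_bool (L2s K D U r j)))"
      unfolding codeword_def ua_def by (simp only: sum_distrib_left)
    also have "\<dots> = (\<Sum>r<K*ua. \<Sum>j<N. w j * (z (r div ua) (r mod ua) * of_bool (L2s K D U r j)))"
      by (rule sum.swap)
    also have "\<dots> = (\<Sum>r<K*ua. z (r div ua) (r mod ua) * g (rw r))"
      unfolding g_def L2 by (simp only: sum_distrib_left mult_ac)
    also have "\<dots> = (\<Sum>r<K*ua. if r = k*ua + i then z k i else 0)"
      by (rule sum.cong) (simp_all add: claim)
    also have "\<dots> = z k i"
    proof -
      have "k*ua + i < K*ua"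
      proof -
        have "k*ua + i < k*ua + ua" using i by simp
        also have "\<dots> = (k+1)*ua" by simp
        also have "\<dots> \<le> K*ua" using k by (intro mult_le_mono1) simp
        finally show ?thesis .
      qed
      then show ?thesis by simp
    qed
    finally show "x k i = y k i" by (simp add: z_def)
  qed
  show ?thesis
    using dec rate by (auto simp: ua_def N_def)
qed

end
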